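(* Identify $\mathbf r=(x,y)\in\mathbb R^2$ with $z=x+iy\in\mathbb C$, and let $$K(w,z)=\frac{1}{\pi}\,e^{-(|w|^2+|z|^2)/2}\,e^{w\bar z},\qquad w,z\in\mathbb C .$$ For $m\ge 1$ define $\rho_{(m)}(\mathbf r_1,\dots,\mathbf r_m)=\det\big[K(z_j,z_l)\big]_{j,l=1}^m$ (the $m$-point correlation functions of the bulk scaled complex Ginibre ensemble). Then for every integer $k\ge 1$, every $\mathbf r_1,\dots,\mathbf r_k\in\mathbb R^2$ (with $\mathbf r_j=(x_j,y_j)$) and every integer $p\ge 0$, $$\int_{\mathbb R^2}(x-iy)^p\Big(\rho_{(k+1)}(\mathbf r_1,\dots,\mathbf r_k,\mathbf r)-\frac1\pi\,\rho_{(k)}(\mathbf r_1,\dots,\mathbf r_k)\Big)\,dx\,dy\;+\;\Big(\sum_{j=1}^k (x_j-iy_j)^p\Big)\rho_{(k)}(\mathbf r_1,\dots,\mathbf r_k)=0,$$ where $\mathbf r=(x,y)$ is the integration variable.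
   Context: This is the statement that $\int_{\mathbb R^2}(x-iy)^p\,q(\mathbf r_1,\dots,\mathbf r_k,\mathbf r)\,d\mathbf r=0$ for $q(\mathbf r_1,\dots,\mathbf r_k,\mathbf r)=\rho_{(k+1)}(\mathbf r_1,\dots,\mathbf r_k,\mathbf r)-\frac1\pi\rho_{(k)}(\mathbf r_1,\dots,\mathbf r_k)+\sum_{j=1}^k\delta(\mathbf r-\mathbf r_j)\rho_{(k)}(\mathbf r_1,\dots,\mathbf r_k)$, with the delta-function terms integrated out explicitly. *)

theory Defs
  imports "HOL-Analysis.Analysis" "Jordan_Normal_Form.Determinant"
begin

definition ginibre_K :: "complex \<Rightarrow> complex \<Rightarrow> complex" where
  "ginibre_K w z =
     complex_of_real (1 / pi) * exp (- complex_of_real ((cmod w ^ 2 + cmod z ^ 2) / 2)) * exp (w * cnj z)"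

text \<open>m-point correlation function: rho_m(z_0,...,z_{m-1}) = det [K(z_j,z_l)]_{j,l<m}.
  Points are given as a sequence indexed from 0; only indices below m matter.\<close>
definition ginibre_rho :: "nat \<Rightarrow> (nat \<Rightarrow> complex) \<Rightarrow> complex" where
  "ginibre_rho m z = det (mat m m (\<lambda>(j, l). ginibre_K (z j) (z l)))"

end

theory Submission
  imports Defs "HOL-Probability.Probability" "HOL-Real_Asymp.Real_Asymp"
begin

lemma mat_delete_twice:
  assumes M: "M \<in> carrier_mat (Suc k) (Suc k)" and k: "k \<ge> 1" and l: "l < k" and j: "j < k"
  shows "mat_delete (mat_delete M k l) j (k - 1) = mat_delete (mat_delete M k k) j l"
  using M k l j by (intro eq_matI) (auto simp: mat_delete_def)

lemma det_block:
  fixes M :: "'a :: comm_ring_1 mat"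
  assumes M: "M \<in> carrier_mat (Suc k) (Suc k)" and k: "k \<ge> 1"
  shows "det M = M $$ (k,k) * det (mat_delete M k k)
     - (\<Sum>l<k. \<Sum>j<k. M $$ (k,l) * M $$ (j,k) * cofactor (mat_delete M k k) j l)"
proof -
  have "det M = (\<Sum>l<Suc k. M $$ (k,l) * cofactor M k l)"
    by (rule laplace_expansion_row[OF M]) simp
  also have "\<dots> = (\<Sum>l<k. M $$ (k,l) * cofactor M k l) + M $$ (k,k) * det (mat_delete M k k)"
    by (simp add: cofactor_def)
  also have "(\<Sum>l<k. M $$ (k,l) * cofactor M k l) =
      - (\<Sum>l<k. \<Sum>j<k. M $$ (k,l) * M $$ (j,k) * cofactor (mat_delete M k k) j l)"
  proof -
    have "M $$ (k,l) * cofactor M k l = - (\<Sum>j<k. M $$ (k,l) * M $$ (j,k) * cofactor (mat_delete M k k) j l)"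
      if l: "l < k" for l
    proof -
      define D where "D = mat_delete M k l"
      have D: "D \<in> carrier_mat k k" using M unfolding D_def
        using mat_delete_carrier[OF M] by simp
      have "det D = (\<Sum>j<k. D $$ (j, k-1) * cofactor D j (k-1))"
        by (rule laplace_expansion_column[OF D]) (use k in simp)
      also have "\<dots> = (\<Sum>j<k. M $$ (j,k) * ((-1)^(j+(k-1)) * det (mat_delete (mat_delete M k k) j l)))"
      proof (rule sum.cong[OF refl])
        fix j assume j: "j \<in> {..<k}"
        have "D $$ (j, k-1) = M $$ (j,k)" using j l k M unfolding D_def mat_delete_def by auto
        moreover have "cofactor D j (k-1) = (-1)^(j+(k-1)) * det (mat_delete (mat_delete M k k) j l)"
          unfolding cofactor_def D_def using mat_delete_twice[OF M k l] j by simp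
        ultimately show "D $$ (j, k-1) * cofactor D j (k-1) = M $$ (j,k) * ((-1)^(j+(k-1)) * det (mat_delete (mat_delete M k k) j l))"
          by simp
      qed
      finally have dD: "det D = \<dots>" .
      have sgn: "(-1)^(k+l) * (-1)^(j+(k-1)) = - ((-1)^(j+l) :: 'a)" for j
      proof -
        have "k + l + (j + (k-1)) = Suc (2*(k-1)) + (j + l)" using k by simp
        then have "(-1)^(k+l) * (-1)^(j+(k-1)) = ((-1) ^ (Suc (2*(k-1)) + (j + l)) :: 'a)"
          by (metis power_add)
        also have "\<dots> = - ((-1)^(j+l))" by (simp add: power_add power_mult)
        finally show ?thesis .
      qed
      have "M $$ (k,l) * cofactor M k l = M $$ (k,l) * ((-1)^(k+l) * det D)"
        by (simp add: cofactor_def D_def)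
      also have "\<dots> = (\<Sum>j<k. M $$ (k,l) * M $$ (j,k) * (((-1)^(k+l) * (-1)^(j+(k-1))) * det (mat_delete (mat_delete M k k) j l)))"
        unfolding dD by (simp add: sum_distrib_left algebra_simps)
      also have "\<dots> = - (\<Sum>j<k. M $$ (k,l) * M $$ (j,k) * cofactor (mat_delete M k k) j l)"
        unfolding sgn cofactor_def by (simp add: sum_negf algebra_simps)
      finally show ?thesis .
    qed
    then show ?thesis by (simp add: sum_negf)
  qed
  finally show ?thesis by simp
qed
lemma integrable_exp_half_sq: "integrable lborel (\<lambda>x::real. exp (- (x\<^sup>2) / 2))"
proof -
  have "integrable lborel (\<lambda>x. sqrt (2*pi) * (std_normal_density x * x ^ 0))"
    using integrable_std_normal_moment[of 0] by (intro integrable_mult_right)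
  then show ?thesis by (simp add: std_normal_density_def)
qed

lemma gauss1_integrable:
  fixes \<alpha> :: complex
  shows "integrable lborel (\<lambda>x::real. exp (complex_of_real (-(x\<^sup>2)) + \<alpha> * of_real x))"
proof (rule Bochner_Integration.integrable_bound)
  show "integrable lborel (\<lambda>x. exp ((Re \<alpha>)\<^sup>2/2) * exp (- (x\<^sup>2) / 2))"
    using integrable_exp_half_sq by (intro integrable_mult_right)
  show "(\<lambda>x::real. exp (complex_of_real (-(x\<^sup>2)) + \<alpha> * of_real x)) \<in> borel_measurable lborel"
    by measurable
  show "AE x in lborel. norm (exp (complex_of_real (-(x\<^sup>2)) + \<alpha> * of_real x)) \<le> norm (exp ((Re \<alpha>)\<^sup>2/2) * exp (- (x\<^sup>2) / 2))"
  proof (rule AE_I2)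
    fix x :: real
    have "-(x\<^sup>2) + Re \<alpha> * x \<le> (Re \<alpha>)\<^sup>2/2 + (- (x\<^sup>2) / 2)"
      using sum_power2_ge_zero[of "x - Re \<alpha>" 0] by (simp add: power2_eq_square algebra_simps)
    then have "exp (-(x\<^sup>2) + Re \<alpha> * x) \<le> exp ((Re \<alpha>)\<^sup>2/2) * exp (- (x\<^sup>2) / 2)"
      by (simp add: exp_add[symmetric])
    then show "norm (exp (complex_of_real (-(x\<^sup>2)) + \<alpha> * of_real x)) \<le> norm (exp ((Re \<alpha>)\<^sup>2/2) * exp (- (x\<^sup>2) / 2))"
      by (simp add: norm_exp_eq_Re)
  qed
qed

lemma char_std_normal_lborel:
  "(\<integral>v. std_normal_density v *\<^sub>R iexp (\<tau> * v) \<partial>lborel) = complex_of_real (exp (- (\<tau>\<^sup>2) / 2))"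
proof -
  have "char std_normal_distribution \<tau> = (\<integral>v. std_normal_density v *\<^sub>R iexp (\<tau> * v) \<partial>lborel)"
    unfolding char_def by (subst integral_density) auto
  then show ?thesis using char_std_normal_distribution by (metis)
qed

lemma gauss1:
  fixes \<alpha> :: complex
  shows "(\<integral>x. exp (complex_of_real (-(x\<^sup>2)) + \<alpha> * of_real x) \<partial>lborel) = complex_of_real (sqrt pi) * exp (\<alpha>\<^sup>2/4)"
proof -
  define s where "s = Re \<alpha>"
  define t where "t = Im \<alpha>"
  define c :: real where "c = 1 / sqrt 2"
  have c0: "c \<noteq> 0" and c2: "c\<^sup>2 = 1/2" and cpos: "c > 0" by (auto simp: c_def power_divide)
  have \<alpha>: "\<alpha> = complex_of_real s + \<i> * complex_of_real t" by (simp add: s_def t_def complex_eq)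
  have cc: "complex_of_real c * complex_of_real c = 1/2"
    using c2 by (metis of_real_mult power2_eq_square of_real_divide of_real_1 of_real_numeral)
  have cc2: "complex_of_real c * (complex_of_real c * 2) = 1"
    using cc by (simp add: mult.assoc[symmetric])
  define K where "K = exp (complex_of_real (s\<^sup>2/4) + \<i> * complex_of_real (t * s / 2))"
  have pt: "exp (complex_of_real (-((s/2 + c * v)\<^sup>2)) + \<alpha> * of_real (s/2 + c * v))
      = (complex_of_real (sqrt (2*pi)) * K) * (std_normal_density v *\<^sub>R iexp ((t * c) * v))" for v
  proof -
    have "std_normal_density v *\<^sub>R iexp ((t * c) * v) = complex_of_real (1 / sqrt (2*pi)) * (complex_of_real (exp (- v\<^sup>2 / 2)) * iexp ((t * c) * v))"
      by (simp add: std_normal_density_def scaleR_conv_of_real)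
    also have "complex_of_real (exp (- v\<^sup>2 / 2)) = exp (complex_of_real (- v\<^sup>2 / 2))"
      by (rule exp_of_real[symmetric])
    finally have "std_normal_density v *\<^sub>R iexp ((t * c) * v) = complex_of_real (1 / sqrt (2*pi)) * exp (complex_of_real (- v\<^sup>2 / 2) + \<i> * complex_of_real ((t * c) * v))"
      by (simp only: exp_add)
    then have "(complex_of_real (sqrt (2*pi)) * K) * (std_normal_density v *\<^sub>R iexp ((t * c) * v))
       = K * exp (complex_of_real (- v\<^sup>2 / 2) + \<i> * complex_of_real ((t * c) * v))"
      by simp
    also have "\<dots> = exp (complex_of_real (s\<^sup>2/4 - v\<^sup>2/2) + \<i> * complex_of_real (t * s / 2 + t * c * v))"
      unfolding K_def by (simp add: exp_add[symmetric] algebra_simps)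
    also have "complex_of_real (s\<^sup>2/4 - v\<^sup>2/2) + \<i> * complex_of_real (t * s / 2 + t * c * v)
        = complex_of_real (-((s/2 + c * v)\<^sup>2)) + \<alpha> * of_real (s/2 + c * v)"
      unfolding \<alpha> by (simp add: power2_eq_square algebra_simps cc cc2)
    finally show ?thesis by simp
  qed
  have "(\<integral>x. exp (complex_of_real (-(x\<^sup>2)) + \<alpha> * of_real x) \<partial>lborel)
      = \<bar>c\<bar> *\<^sub>R (\<integral>v. exp (complex_of_real (-((s/2 + c * v)\<^sup>2)) + \<alpha> * of_real (s/2 + c * v)) \<partial>lborel)"
    by (rule lborel_integral_real_affine[OF c0])
  also have "\<dots> = c *\<^sub>R ((complex_of_real (sqrt (2*pi)) * K) * (\<integral>v. std_normal_density v *\<^sub>R iexp ((t * c) * v) \<partial>lborel))"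
    unfolding pt using cpos by (simp only: integral_mult_right_zero abs_of_pos)
  also have "\<dots> = c *\<^sub>R ((complex_of_real (sqrt (2*pi)) * K) * complex_of_real (exp (- ((t*c)\<^sup>2) / 2)))"
    by (simp only: char_std_normal_lborel)
  also have "\<dots> = complex_of_real (sqrt pi) * exp (\<alpha>\<^sup>2/4)"
  proof -
    have "c * sqrt (2*pi) = sqrt pi" unfolding c_def by (simp add: real_sqrt_mult)
    moreover have "K * complex_of_real (exp (- ((t*c)\<^sup>2) / 2)) = exp (\<alpha>\<^sup>2/4)"
    proof -
      have e1: "complex_of_real (exp (- ((t*c)\<^sup>2) / 2)) = exp (complex_of_real (-(t\<^sup>2)/4))"
      proof -
        have "- ((t*c)\<^sup>2) / 2 = -(t\<^sup>2)/4" using c2 by (simp add: power_mult_distrib)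
        then show ?thesis by (metis exp_of_real)
      qed
      have "K * exp (complex_of_real (-(t\<^sup>2)/4)) = exp (complex_of_real (s\<^sup>2/4) + \<i> * complex_of_real (t * s / 2) + complex_of_real (-(t\<^sup>2)/4))"
        unfolding K_def by (simp only: exp_add)
      also have "complex_of_real (s\<^sup>2/4) + \<i> * complex_of_real (t * s / 2) + complex_of_real (-(t\<^sup>2)/4) = \<alpha>\<^sup>2/4"
        unfolding \<alpha> by (simp add: power2_eq_square algebra_simps)
      finally show ?thesis using e1 by simp
    qed
    ultimately show ?thesis
      by (simp add: scaleR_conv_of_real) (metis (no_types, lifting) mult.assoc mult.left_commute of_real_mult)
  qed
  finally show ?thesis .
qed


lemma lborel_complex: "(lborel :: complex measure) = distr (lborel \<Otimes>\<^sub>M lborel) borel (\<lambda>(x,y). Complex x y)"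
proof (rule lborel_eqI)
  fix l u :: complex
  assume le: "\<And>b. b \<in> Basis \<Longrightarrow> l \<bullet> b \<le> u \<bullet> b"
  have le1: "Re l \<le> Re u" and le2: "Im l \<le> Im u"
    using le[of 1] le[of \<i>] by (auto simp: Basis_complex_def)
  have [measurable]: "(\<lambda>(x,y). Complex x y) \<in> measurable (lborel \<Otimes>\<^sub>M lborel) (borel :: complex measure)"
    unfolding Complex_eq by measurable
  have eq: "(\<lambda>(x,y). Complex x y) -` box l u \<inter> space (lborel \<Otimes>\<^sub>M lborel) = box (Re l) (Re u) \<times> box (Im l) (Im u)"
    by (auto simp: box_def Basis_complex_def space_pair_measure)
  show "emeasure (distr (lborel \<Otimes>\<^sub>M lborel) borel (\<lambda>(x,y). Complex x y)) (box l u) = (\<Prod>b\<in>Basis. (u - l) \<bullet> b)"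
    using le1 le2
    by (simp add: emeasure_distr eq lborel.emeasure_pair_measure_Times Basis_complex_def ennreal_mult)
qed simp

lemma pow_le_fact_exp: assumes "(u::real) \<ge> 0" shows "u ^ N \<le> fact N * exp u"
proof -
  have s: "summable (\<lambda>n. u^n / fact n)" using summable_exp_generic[of u] by (simp add: divide_inverse mult.commute)
  have e: "exp u = (\<Sum>n. u^n / fact n)" by (simp add: exp_def divide_inverse mult.commute)
  have "u^N / fact N \<le> (\<Sum>n. u^n / fact n)"
    using sum_le_suminf[OF s, of "{N}"] assms by simp
  then show ?thesis unfolding e[symmetric] by (simp add: divide_le_eq mult.commute)
qed

lemma dom_bound:
  fixes t c :: real assumes t: "t \<ge> 0"
  shows "(1+t)^N * exp (-(t\<^sup>2) + c*t) \<le> fact N * exp 1 * exp ((c+1)\<^sup>2/2) * exp (-(t\<^sup>2)/2)"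
proof -
  have "(1+t)^N * exp (-(t\<^sup>2) + c*t) \<le> (fact N * exp (1+t)) * exp (-(t\<^sup>2) + c*t)"
    using pow_le_fact_exp[of "1+t" N] t by (intro mult_right_mono) auto
  also have "\<dots> = fact N * exp 1 * exp (-(t\<^sup>2) + (c+1)*t)"
    by (simp add: exp_add[symmetric] algebra_simps)
  also have "\<dots> \<le> fact N * exp 1 * exp ((c+1)\<^sup>2/2 + (-(t\<^sup>2)/2))"
  proof -
    have "-(t\<^sup>2) + (c+1)*t \<le> (c+1)\<^sup>2/2 + (-(t\<^sup>2)/2)"
      using sum_power2_ge_zero[of "t - (c+1)" 0] by (simp add: power2_eq_square algebra_simps)
    then show ?thesis by (intro mult_left_mono) auto
  qed
  finally show ?thesis by (simp only: exp_add mult.assoc)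
qed

lemma integrable_complex_iff:
  fixes f :: "complex \<Rightarrow> 'b::{banach, second_countable_topology}"
  assumes [measurable]: "f \<in> borel_measurable borel"
  shows "integrable lborel f \<longleftrightarrow> integrable (lborel \<Otimes>\<^sub>M lborel) (\<lambda>(x,y). f (Complex x y))"
proof -
  have [measurable]: "(\<lambda>(x,y). Complex x y) \<in> measurable (lborel \<Otimes>\<^sub>M lborel) (borel :: complex measure)"
    unfolding Complex_eq by measurable
  show ?thesis
    by (subst lborel_complex) (simp add: integrable_distr_eq case_prod_unfold)
qed

lemma integral_complex_eq:
  fixes f :: "complex \<Rightarrow> 'b::{banach, second_countable_topology}"
  assumes [measurable]: "f \<in> borel_measurable borel"
  shows "integral\<^sup>L lborel f = integral\<^sup>L (lborel \<Otimes>\<^sub>M lborel) (\<lambda>(x,y). f (Complex x y))"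
proof -
  have [measurable]: "(\<lambda>(x,y). Complex x y) \<in> measurable (lborel \<Otimes>\<^sub>M lborel) (borel :: complex measure)"
    unfolding Complex_eq by measurable
  show ?thesis
    by (subst lborel_complex) (simp add: integral_distr case_prod_unfold)
qed

lemma integrable_prod_mult:
  fixes f g :: "real \<Rightarrow> 'a::{real_normed_field, banach, second_countable_topology}"
  assumes f: "integrable lborel f" and g: "integrable lborel g"
  shows "integrable (lborel \<Otimes>\<^sub>M lborel) (\<lambda>(x,y). f x * g y)"
proof (rule lborel_pair.Fubini_integrable)
  have [measurable]: "f \<in> borel_measurable lborel" "g \<in> borel_measurable lborel"
    using f g by (auto intro: borel_measurable_integrable)
  show "(\<lambda>(x,y). f x * g y) \<in> borel_measurable (lborel \<Otimes>\<^sub>M lborel)" by measurable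
  have "integrable lborel (\<lambda>x. norm (f x) * (\<integral>y. norm (g y) \<partial>lborel))"
    using f by (intro integrable_mult_left) auto
  then show "integrable lborel (\<lambda>x. \<integral>y. norm (case (x, y) of (x, y) \<Rightarrow> f x * g y) \<partial>lborel)"
    by (simp add: norm_mult)
  show "AE x in lborel. integrable lborel (\<lambda>y. case (x, y) of (x, y) \<Rightarrow> f x * g y)"
    using g by (intro AE_I2) auto
qed

lemma integral_prod_mult:
  fixes f g :: "real \<Rightarrow> 'a::{real_normed_field, banach, second_countable_topology}"
  assumes f: "integrable lborel f" and g: "integrable lborel g"
  shows "integral\<^sup>L (lborel \<Otimes>\<^sub>M lborel) (\<lambda>(x,y). f x * g y) = integral\<^sup>L lborel f * integral\<^sup>L lborel g"
proof -
  have "integral\<^sup>L (lborel \<Otimes>\<^sub>M lborel) (\<lambda>(x,y). f x * g y) = (\<integral>x. (\<integral>y. f x * g y \<partial>lborel) \<partial>lborel)"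
    using lborel_pair.integral_fst'[OF integrable_prod_mult[OF f g]] by simp
  also have "\<dots> = (\<integral>x. f x * integral\<^sup>L lborel g \<partial>lborel)" by simp
  also have "\<dots> = integral\<^sup>L lborel f * integral\<^sup>L lborel g" by simp
  finally show ?thesis .
qed


lemma integrable_exp_half_cmod: "integrable lborel (\<lambda>w::complex. exp (- (cmod w)\<^sup>2 / 2))"
proof -
  have "integrable (lborel \<Otimes>\<^sub>M lborel) (\<lambda>(x::real,y::real). exp (- (x\<^sup>2) / 2) * exp (- (y\<^sup>2) / 2) :: real)"
    by (intro integrable_prod_mult integrable_exp_half_sq)
  moreover have "exp (- (cmod (Complex x y))\<^sup>2 / 2) = exp (- (x\<^sup>2) / 2) * exp (- (y\<^sup>2) / 2)" for x y
    by (simp add: cmod_def exp_add[symmetric] add_divide_distrib)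
  ultimately show ?thesis
    by (subst integrable_complex_iff) (auto simp: case_prod_unfold)
qed

lemma integrable_dom:
  fixes h :: "complex \<Rightarrow> 'b::{banach, second_countable_topology}"
  assumes [measurable]: "h \<in> borel_measurable borel"
    and bnd: "\<And>w. norm (h w) \<le> C * (1 + cmod w)^N * exp (-(cmod w)\<^sup>2 + c * cmod w)"
  shows "integrable lborel h"
proof (rule Bochner_Integration.integrable_bound)
  define K where "K = \<bar>C\<bar> * (fact N * exp 1 * exp ((c+1)\<^sup>2/2))"
  show "integrable lborel (\<lambda>w::complex. K * exp (- (cmod w)\<^sup>2 / 2))"
    by (intro integrable_mult_right integrable_exp_half_cmod)
  show "h \<in> borel_measurable lborel" by simp
  show "AE w in lborel. norm (h w) \<le> norm (K * exp (- (cmod w)\<^sup>2 / 2))"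
  proof (rule AE_I2)
    fix w :: complex
    have "norm (h w) \<le> \<bar>C\<bar> * ((1 + cmod w)^N * exp (-(cmod w)\<^sup>2 + c * cmod w))"
      using bnd[of w] by (smt (verit, best) mult.assoc mult_right_mono norm_ge_zero zero_le_mult_iff zero_le_power exp_gt_zero add_nonneg_nonneg zero_le_one)
    also have "\<dots> \<le> \<bar>C\<bar> * (fact N * exp 1 * exp ((c+1)\<^sup>2/2) * exp (- (cmod w)\<^sup>2 / 2))"
      by (intro mult_left_mono dom_bound) auto
    finally show "norm (h w) \<le> norm (K * exp (- (cmod w)\<^sup>2 / 2))"
      unfolding K_def by (simp add: abs_mult mult.assoc)
  qed
qed

lemma FTC_real_line:
  fixes F f :: "real \<Rightarrow> complex"
  assumes D: "\<And>x. (F has_vector_derivative f x) (at x)"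
    and C: "\<And>x. isCont f x"
    and I: "integrable lborel f"
    and T: "(F \<longlongrightarrow> 0) at_top" and B: "(F \<longlongrightarrow> 0) at_bot"
  shows "integral\<^sup>L lborel f = 0"
proof -
  have "(LBINT x=-\<infinity>..\<infinity>. f x) = 0 - 0"
  proof (rule interval_integral_FTC_integrable)
    show "set_integrable lborel (einterval (-\<infinity>) \<infinity>) f"
      using I by (simp add: set_integrable_def einterval_def)
    have "((F \<circ> real_of_ereal) \<longlongrightarrow> 0) (filtermap ereal at_bot)"
      by (simp add: filterlim_filtermap o_def B)
    then show "((F \<circ> real_of_ereal) \<longlongrightarrow> 0) (at_right (-\<infinity>))" by (simp add: at_right_MInf)
    have "((F \<circ> real_of_ereal) \<longlongrightarrow> 0) (filtermap ereal at_top)"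
      by (simp add: filterlim_filtermap o_def T)
    then show "((F \<circ> real_of_ereal) \<longlongrightarrow> 0) (at_left \<infinity>)" by (simp add: at_left_PInf)
  qed (use D C in auto)
  then show ?thesis
    by (simp add: interval_lebesgue_integral_def set_lebesgue_integral_def einterval_def)
qed

definition gE :: "complex \<Rightarrow> complex \<Rightarrow> complex \<Rightarrow> complex" where
  "gE a b w = exp (- complex_of_real ((cmod w)\<^sup>2) + w * cnj a + b * cnj w)"

definition gmono :: "nat \<Rightarrow> nat \<Rightarrow> complex \<Rightarrow> complex \<Rightarrow> complex \<Rightarrow> complex" where
  "gmono m n a b w = w^m * cnj w^n * gE a b w"

lemma norm_gE: "norm (gE a b w) \<le> exp (-(cmod w)\<^sup>2 + (cmod a + cmod b) * cmod w)"
proof -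
  have "Re (w * cnj a) \<le> cmod a * cmod w" using complex_Re_le_cmod[of "w * cnj a"] by (simp add: norm_mult mult.commute)
  moreover have "Re (b * cnj w) \<le> cmod b * cmod w" using complex_Re_le_cmod[of "b * cnj w"] by (simp add: norm_mult mult.commute)
  ultimately show ?thesis unfolding gE_def by (simp add: norm_exp_eq_Re algebra_simps)
qed

lemma gE_measurable[measurable]: "gE a b \<in> borel_measurable borel"
  unfolding gE_def[abs_def] by (intro borel_measurable_continuous_onI continuous_intros)

lemma mono_measurable[measurable]: "gmono m n a b \<in> borel_measurable borel"
  unfolding gmono_def[abs_def] gE_def by (intro borel_measurable_continuous_onI continuous_intros)

definition KK :: "nat \<Rightarrow> complex \<Rightarrow> complex \<Rightarrow> real" where
  "KK N a b = fact N * exp 1 * exp ((cmod a + cmod b + 1)\<^sup>2/2)"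

lemma mono_bound: "norm (gmono m n a b w) \<le> KK (m+n) a b * exp (- (cmod w)\<^sup>2 / 2)"
proof -
  have "norm (gmono m n a b w) = cmod w ^ (m+n) * norm (gE a b w)"
    by (simp add: gmono_def norm_mult norm_power power_add)
  also have "\<dots> \<le> (1 + cmod w) ^ (m+n) * exp (-(cmod w)\<^sup>2 + (cmod a + cmod b) * cmod w)"
    by (intro mult_mono power_mono norm_gE) auto
  also have "\<dots> \<le> KK (m+n) a b * exp (- (cmod w)\<^sup>2 / 2)"
    unfolding KK_def by (rule dom_bound) simp
  finally show ?thesis .
qed

lemma integrable_gmono: "integrable lborel (gmono m n a b)"
proof (rule Bochner_Integration.integrable_bound)
  show "integrable lborel (\<lambda>w::complex. KK (m+n) a b * exp (- (cmod w)\<^sup>2 / 2))"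
    by (intro integrable_mult_right integrable_exp_half_cmod)
  show "gmono m n a b \<in> borel_measurable lborel" by simp
  show "AE w in lborel. norm (gmono m n a b w) \<le> norm (KK (m+n) a b * exp (- (cmod w)\<^sup>2 / 2))"
    using mono_bound by (intro AE_I2) (simp add: KK_def)
qed

lemma KK_pos: "KK N a b > 0" by (simp add: KK_def)

lemma mono_bound_x: "norm (gmono m n a b (Complex x y)) \<le> KK (m+n) a b * exp (- (x\<^sup>2) / 2)"
proof -
  have "exp (- (cmod (Complex x y))\<^sup>2 / 2) \<le> exp (- (x\<^sup>2) / 2)"
    by (simp add: cmod_def)
  then show ?thesis using mono_bound[of m n a b "Complex x y"] KK_pos[of "m+n" a b]
    by (smt (verit) mult_left_mono)
qed

lemma mono_bound_y: "norm (gmono m n a b (Complex x y)) \<le> KK (m+n) a b * exp (- (y\<^sup>2) / 2)"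
proof -
  have "exp (- (cmod (Complex x y))\<^sup>2 / 2) \<le> exp (- (y\<^sup>2) / 2)"
    by (simp add: cmod_def)
  then show ?thesis using mono_bound[of m n a b "Complex x y"] KK_pos[of "m+n" a b]
    by (smt (verit) mult_left_mono)
qed

lemma mono_Complex_cont_x: "continuous_on UNIV (\<lambda>x. gmono m n a b (Complex x y))"
  unfolding gmono_def gE_def Complex_eq by (intro continuous_intros)

lemma mono_Complex_cont_y: "continuous_on UNIV (\<lambda>y. gmono m n a b (Complex x y))"
  unfolding gmono_def gE_def Complex_eq by (intro continuous_intros)

lemma integrable_gmono_x: "integrable lborel (\<lambda>x. gmono m n a b (Complex x y))"
proof (rule Bochner_Integration.integrable_bound)
  show "integrable lborel (\<lambda>x::real. KK (m+n) a b * exp (- (x\<^sup>2) / 2))"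
    by (intro integrable_mult_right integrable_exp_half_sq)
  show "(\<lambda>x. gmono m n a b (Complex x y)) \<in> borel_measurable lborel"
    using mono_Complex_cont_x by (simp add: borel_measurable_continuous_onI)
  show "AE x in lborel. norm (gmono m n a b (Complex x y)) \<le> norm (KK (m+n) a b * exp (- (x\<^sup>2) / 2))"
    using mono_bound_x KK_pos by (intro AE_I2) (smt (verit) real_norm_def exp_gt_zero mult_pos_pos)
qed

lemma integrable_gmono_y: "integrable lborel (\<lambda>y. gmono m n a b (Complex x y))"
proof (rule Bochner_Integration.integrable_bound)
  show "integrable lborel (\<lambda>y::real. KK (m+n) a b * exp (- (y\<^sup>2) / 2))"
    by (intro integrable_mult_right integrable_exp_half_sq)
  show "(\<lambda>y. gmono m n a b (Complex x y)) \<in> borel_measurable lborel"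
    using mono_Complex_cont_y by (simp add: borel_measurable_continuous_onI)
  show "AE y in lborel. norm (gmono m n a b (Complex x y)) \<le> norm (KK (m+n) a b * exp (- (y\<^sup>2) / 2))"
    using mono_bound_y KK_pos by (intro AE_I2) (smt (verit) real_norm_def exp_gt_zero mult_pos_pos)
qed

lemma mono_tendsto_x: "((\<lambda>x. gmono m n a b (Complex x y)) \<longlongrightarrow> 0) at_top"
      "((\<lambda>x. gmono m n a b (Complex x y)) \<longlongrightarrow> 0) at_bot"
proof -
  have l1: "((\<lambda>x::real. KK (m+n) a b * exp (- (x\<^sup>2) / 2)) \<longlongrightarrow> 0) at_top" by real_asymp
  have l2: "((\<lambda>x::real. KK (m+n) a b * exp (- (x\<^sup>2) / 2)) \<longlongrightarrow> 0) at_bot" by real_asymp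
  show "((\<lambda>x. gmono m n a b (Complex x y)) \<longlongrightarrow> 0) at_top"
    by (rule Lim_null_comparison[OF always_eventually[OF allI] l1], rule mono_bound_x)
  show "((\<lambda>x. gmono m n a b (Complex x y)) \<longlongrightarrow> 0) at_bot"
    by (rule Lim_null_comparison[OF always_eventually[OF allI] l2], rule mono_bound_x)
qed

lemma mono_tendsto_y: "((\<lambda>y. gmono m n a b (Complex x y)) \<longlongrightarrow> 0) at_top"
      "((\<lambda>y. gmono m n a b (Complex x y)) \<longlongrightarrow> 0) at_bot"
proof -
  have l1: "((\<lambda>x::real. KK (m+n) a b * exp (- (x\<^sup>2) / 2)) \<longlongrightarrow> 0) at_top" by real_asymp
  have l2: "((\<lambda>x::real. KK (m+n) a b * exp (- (x\<^sup>2) / 2)) \<longlongrightarrow> 0) at_bot" by real_asymp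
  show "((\<lambda>y. gmono m n a b (Complex x y)) \<longlongrightarrow> 0) at_top"
    by (rule Lim_null_comparison[OF always_eventually[OF allI] l1], rule mono_bound_y)
  show "((\<lambda>y. gmono m n a b (Complex x y)) \<longlongrightarrow> 0) at_bot"
    by (rule Lim_null_comparison[OF always_eventually[OF allI] l2], rule mono_bound_y)
qed


definition Dx :: "nat \<Rightarrow> complex \<Rightarrow> complex \<Rightarrow> complex \<Rightarrow> complex" where
  "Dx p a b w = of_nat p * gmono 0 (p-1) a b w + (cnj a + b) * gmono 0 p a b w - gmono 1 p a b w - gmono 0 (p+1) a b w"

definition Dy :: "nat \<Rightarrow> complex \<Rightarrow> complex \<Rightarrow> complex \<Rightarrow> complex" where
  "Dy p a b w = - \<i> * of_nat p * gmono 0 (p-1) a b w + \<i> * (cnj a - b) * gmono 0 p a b w + \<i> * gmono 1 p a b w - \<i> * gmono 0 (p+1) a b w"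

lemma Dx_Dy: "Dx p a b w - \<i> * Dy p a b w = 2 * (cnj a * gmono 0 p a b w - gmono 0 (p+1) a b w)"
  unfolding Dx_def Dy_def by (simp add: algebra_simps)

lemma gE_Complex: "gE a b (Complex x y) = exp (-(of_real x ^ 2 + of_real y ^ 2) + (of_real x + \<i> * of_real y) * cnj a + b * (of_real x - \<i> * of_real y))"
proof -
  have "complex_of_real ((cmod (Complex x y))\<^sup>2) = of_real x ^ 2 + of_real y ^ 2"
    by (simp add: cmod_power2)
  moreover have "cnj (Complex x y) = of_real x - \<i> * of_real y"
    by (simp add: complex_eq_iff)
  ultimately show ?thesis unfolding gE_def Complex_eq by simp
qed

lemma cnj_Complex': "cnj (Complex x y) = of_real x - \<i> * of_real y"
  by (simp add: complex_eq_iff)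

definition Hx where "Hx p a b y z = (z - \<i> * of_real y)^p * exp (-(z ^ 2 + of_real y ^ 2) + (z + \<i> * of_real y) * cnj a + b * (z - \<i> * of_real y))"
definition Hy where "Hy p a b x z = (of_real x - \<i> * z)^p * exp (-(of_real x ^ 2 + z ^ 2) + (of_real x + \<i> * z) * cnj a + b * (of_real x - \<i> * z))"

lemma Hx_real: "Hx p a b y (of_real x) = gmono 0 p a b (Complex x y)"
  unfolding Hx_def gmono_def gE_Complex cnj_Complex' by simp

lemma Hy_real: "Hy p a b x (of_real y) = gmono 0 p a b (Complex x y)"
  unfolding Hy_def gmono_def gE_Complex cnj_Complex' by simp

lemma Hx_deriv: "(Hx p a b y has_field_derivative
   (of_nat p * (z - \<i> * of_real y)^(p-1) + (z - \<i> * of_real y)^p * (cnj a + b - 2 * z)) *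
     exp (-(z ^ 2 + of_real y ^ 2) + (z + \<i> * of_real y) * cnj a + b * (z - \<i> * of_real y))) (at z)"
  unfolding Hx_def[abs_def]
  by (auto intro!: derivative_eq_intros simp: algebra_simps)

lemma Hy_deriv: "(Hy p a b x has_field_derivative
   (- \<i> * of_nat p * (of_real x - \<i> * z)^(p-1) + (of_real x - \<i> * z)^p * (\<i> * cnj a - \<i> * b - 2 * z)) *
     exp (-(of_real x ^ 2 + z ^ 2) + (of_real x + \<i> * z) * cnj a + b * (of_real x - \<i> * z))) (at z)"
  unfolding Hy_def[abs_def]
  by (auto intro!: derivative_eq_intros simp: algebra_simps)

lemma Hx_deriv_real: "((\<lambda>x. gmono 0 p a b (Complex x y)) has_vector_derivative Dx p a b (Complex x y)) (at x)"
proof -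
  have "((\<lambda>x. Hx p a b y (of_real x)) has_vector_derivative
     (of_nat p * (of_real x - \<i> * of_real y)^(p-1) + (of_real x - \<i> * of_real y)^p * (cnj a + b - 2 * of_real x)) *
     exp (-(of_real x ^ 2 + of_real y ^ 2) + (of_real x + \<i> * of_real y) * cnj a + b * (of_real x - \<i> * of_real y))) (at x)"
    by (rule has_vector_derivative_real_field[OF Hx_deriv])
  moreover have "(of_nat p * (of_real x - \<i> * of_real y)^(p-1) + (of_real x - \<i> * of_real y)^p * (cnj a + b - 2 * of_real x)) *
     exp (-(of_real x ^ 2 + of_real y ^ 2) + (of_real x + \<i> * of_real y) * cnj a + b * (of_real x - \<i> * of_real y))
     = Dx p a b (Complex x y)"
    unfolding Dx_def gmono_def gE_Complex cnj_Complex' by (simp add: Complex_eq algebra_simps)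
  ultimately show ?thesis unfolding Hx_real by simp
qed

lemma Hy_deriv_real: "((\<lambda>y. gmono 0 p a b (Complex x y)) has_vector_derivative Dy p a b (Complex x y)) (at y)"
proof -
  have "((\<lambda>y. Hy p a b x (of_real y)) has_vector_derivative
     (- \<i> * of_nat p * (of_real x - \<i> * of_real y)^(p-1) + (of_real x - \<i> * of_real y)^p * (\<i> * cnj a - \<i> * b - 2 * of_real y)) *
     exp (-(of_real x ^ 2 + of_real y ^ 2) + (of_real x + \<i> * of_real y) * cnj a + b * (of_real x - \<i> * of_real y))) (at y)"
    by (rule has_vector_derivative_real_field[OF Hy_deriv])
  moreover have "(- \<i> * of_nat p * (of_real x - \<i> * of_real y)^(p-1) + (of_real x - \<i> * of_real y)^p * (\<i> * cnj a - \<i> * b - 2 * of_real y)) *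
     exp (-(of_real x ^ 2 + of_real y ^ 2) + (of_real x + \<i> * of_real y) * cnj a + b * (of_real x - \<i> * of_real y))
     = Dy p a b (Complex x y)"
    unfolding Dy_def gmono_def gE_Complex cnj_Complex' by (simp add: Complex_eq algebra_simps)
  ultimately show ?thesis unfolding Hy_real by simp
qed


lemma Dx_measurable[measurable]: "Dx p a b \<in> borel_measurable borel"
  unfolding Dx_def[abs_def] by measurable
lemma Dy_measurable[measurable]: "Dy p a b \<in> borel_measurable borel"
  unfolding Dy_def[abs_def] by measurable

lemma integrable_Dx: "integrable lborel (Dx p a b)"
  unfolding Dx_def[abs_def] by (intro Bochner_Integration.integrable_diff Bochner_Integration.integrable_add Bochner_Integration.integrable_mult_right integrable_gmono)
lemma integrable_Dy: "integrable lborel (Dy p a b)"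
  unfolding Dy_def[abs_def] by (intro Bochner_Integration.integrable_diff Bochner_Integration.integrable_add Bochner_Integration.integrable_mult_right integrable_gmono)

lemma integral_Dx: "integral\<^sup>L lborel (Dx p a b) = 0"
proof -
  have I: "integrable (lborel \<Otimes>\<^sub>M lborel) (\<lambda>(x,y). Dx p a b (Complex x y))"
    using integrable_Dx by (subst (asm) integrable_complex_iff) auto
  have inner: "(\<integral>x. Dx p a b (Complex x y) \<partial>lborel) = 0" for y
  proof (rule FTC_real_line)
    show "((\<lambda>x. gmono 0 p a b (Complex x y)) has_vector_derivative Dx p a b (Complex x y)) (at x)" for x
      by (rule Hx_deriv_real)
    have "continuous_on UNIV (\<lambda>x. Dx p a b (Complex x y))"
      unfolding Dx_def gmono_def gE_def Complex_eq by (intro continuous_intros)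
    then show "isCont (\<lambda>x. Dx p a b (Complex x y)) x" for x
      by (simp add: continuous_on_eq_continuous_at)
    show "integrable lborel (\<lambda>x. Dx p a b (Complex x y))"
      unfolding Dx_def by (intro Bochner_Integration.integrable_diff Bochner_Integration.integrable_add Bochner_Integration.integrable_mult_right integrable_gmono_x)
  qed (rule mono_tendsto_x)+
  have "integral\<^sup>L lborel (Dx p a b) = integral\<^sup>L (lborel \<Otimes>\<^sub>M lborel) (\<lambda>(x,y). Dx p a b (Complex x y))"
    by (rule integral_complex_eq) simp
  also have "\<dots> = (\<integral>y. (\<integral>x. Dx p a b (Complex x y) \<partial>lborel) \<partial>lborel)"
    using lborel_pair.integral_snd[of "\<lambda>x y. Dx p a b (Complex x y)"] I by simp
  also have "\<dots> = 0" by (simp add: inner)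
  finally show ?thesis .
qed

lemma integral_Dy: "integral\<^sup>L lborel (Dy p a b) = 0"
proof -
  have I: "integrable (lborel \<Otimes>\<^sub>M lborel) (\<lambda>(x,y). Dy p a b (Complex x y))"
    using integrable_Dy by (subst (asm) integrable_complex_iff) auto
  have inner: "(\<integral>y. Dy p a b (Complex x y) \<partial>lborel) = 0" for x
  proof (rule FTC_real_line)
    show "((\<lambda>y. gmono 0 p a b (Complex x y)) has_vector_derivative Dy p a b (Complex x y)) (at y)" for y
      by (rule Hy_deriv_real)
    have "continuous_on UNIV (\<lambda>y. Dy p a b (Complex x y))"
      unfolding Dy_def gmono_def gE_def Complex_eq by (intro continuous_intros)
    then show "isCont (\<lambda>y. Dy p a b (Complex x y)) y" for y
      by (simp add: continuous_on_eq_continuous_at)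
    show "integrable lborel (\<lambda>y. Dy p a b (Complex x y))"
      unfolding Dy_def by (intro Bochner_Integration.integrable_diff Bochner_Integration.integrable_add Bochner_Integration.integrable_mult_right integrable_gmono_y)
  qed (rule mono_tendsto_y)+
  have "integral\<^sup>L lborel (Dy p a b) = integral\<^sup>L (lborel \<Otimes>\<^sub>M lborel) (\<lambda>(x,y). Dy p a b (Complex x y))"
    by (rule integral_complex_eq) simp
  also have "\<dots> = (\<integral>x. (\<integral>y. Dy p a b (Complex x y) \<partial>lborel) \<partial>lborel)"
    using lborel_pair.integral_fst[of "\<lambda>x y. Dy p a b (Complex x y)"] I by simp
  also have "\<dots> = 0" by (simp add: inner)
  finally show ?thesis .
qed

lemma mono_rec: "integral\<^sup>L lborel (gmono 0 (p+1) a b) = cnj a * integral\<^sup>L lborel (gmono 0 p a b)"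
proof -
  have eq: "gmono 0 (p+1) a b w = cnj a * gmono 0 p a b w - (Dx p a b w - \<i> * Dy p a b w) / 2" for w
    by (simp add: Dx_Dy diff_divide_distrib)
  have "integral\<^sup>L lborel (gmono 0 (p+1) a b) = (\<integral>w. cnj a * gmono 0 p a b w - (Dx p a b w - \<i> * Dy p a b w) / 2 \<partial>lborel)"
    by (rule arg_cong[where f="integral\<^sup>L lborel"], rule ext, rule eq)
  also have "\<dots> = cnj a * integral\<^sup>L lborel (gmono 0 p a b) - (integral\<^sup>L lborel (Dx p a b) - \<i> * integral\<^sup>L lborel (Dy p a b)) / 2"
    using integrable_Dx integrable_Dy integrable_gmono
    by (simp add: integral_diff integral_divide_zero integrable_diff integrable_mult_right)
  also have "\<dots> = cnj a * integral\<^sup>L lborel (gmono 0 p a b)"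
    by (simp add: integral_Dx integral_Dy)
  finally show ?thesis .
qed



lemma integral_gE: "integral\<^sup>L lborel (gmono 0 0 a b) = complex_of_real pi * exp (b * cnj a)"
proof -
  define \<alpha> where "\<alpha> = cnj a + b"
  define \<beta> where "\<beta> = \<i> * (cnj a - b)"
  define f where "f = (\<lambda>x::real. exp (complex_of_real (-(x\<^sup>2)) + \<alpha> * of_real x))"
  define g where "g = (\<lambda>x::real. exp (complex_of_real (-(x\<^sup>2)) + \<beta> * of_real x))"
  have pt: "gmono 0 0 a b (Complex x y) = f x * g y" for x y
  proof -
    have "gmono 0 0 a b (Complex x y) = exp (-(of_real x ^ 2 + of_real y ^ 2) + (of_real x + \<i> * of_real y) * cnj a + b * (of_real x - \<i> * of_real y))"
      by (simp add: gmono_def gE_Complex)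
    also have "-(of_real x ^ 2 + of_real y ^ 2) + (of_real x + \<i> * of_real y) * cnj a + b * (of_real x - \<i> * of_real y)
       = (complex_of_real (-(x\<^sup>2)) + \<alpha> * of_real x) + (complex_of_real (-(y\<^sup>2)) + \<beta> * of_real y)"
      unfolding \<alpha>_def \<beta>_def by (simp add: algebra_simps)
    finally show ?thesis unfolding f_def g_def by (simp add: exp_add)
  qed
  have "integral\<^sup>L lborel (gmono 0 0 a b) = integral\<^sup>L (lborel \<Otimes>\<^sub>M lborel) (\<lambda>(x,y). gmono 0 0 a b (Complex x y))"
    by (rule integral_complex_eq) simp
  also have "\<dots> = integral\<^sup>L (lborel \<Otimes>\<^sub>M lborel) (\<lambda>(x,y). f x * g y)"
    by (simp add: pt)
  also have "\<dots> = integral\<^sup>L lborel f * integral\<^sup>L lborel g"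
    by (rule integral_prod_mult) (simp_all only: f_def g_def gauss1_integrable)
  also have "\<dots> = (complex_of_real (sqrt pi) * exp (\<alpha>\<^sup>2/4)) * (complex_of_real (sqrt pi) * exp (\<beta>\<^sup>2/4))"
    unfolding f_def g_def by (simp only: gauss1)
  also have "\<dots> = (complex_of_real (sqrt pi) * complex_of_real (sqrt pi)) * exp (\<alpha>\<^sup>2/4 + \<beta>\<^sup>2/4)"
    by (simp only: exp_add mult_ac)
  also have "complex_of_real (sqrt pi) * complex_of_real (sqrt pi) = complex_of_real pi"
    by (subst of_real_mult[symmetric]) simp
  also have "\<alpha>\<^sup>2/4 + \<beta>\<^sup>2/4 = b * cnj a"
    unfolding \<alpha>_def \<beta>_def by (simp add: power2_eq_square field_simps)
  finally show ?thesis by simp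
qed

lemma integral_gmono: "integral\<^sup>L lborel (gmono 0 p a b) = complex_of_real pi * cnj a ^ p * exp (b * cnj a)"
proof (induction p)
  case 0 then show ?case by (simp add: integral_gE)
next
  case (Suc p) then show ?case using mono_rec[of p a b] by simp
qed


lemma KK_prod: "ginibre_K w a * ginibre_K b w =
   complex_of_real (1/pi) * complex_of_real (1/pi) * exp (- complex_of_real ((cmod a ^ 2 + cmod b ^ 2) / 2)) * gE a b w"
proof -
  have "ginibre_K w a * ginibre_K b w = complex_of_real (1/pi) * complex_of_real (1/pi) *
     exp ((- complex_of_real ((cmod w ^ 2 + cmod a ^ 2) / 2)) + w * cnj a + (- complex_of_real ((cmod b ^ 2 + cmod w ^ 2) / 2)) + b * cnj w)"
    unfolding ginibre_K_def exp_add by (simp add: ac_simps)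
  also have "(- complex_of_real ((cmod w ^ 2 + cmod a ^ 2) / 2)) + w * cnj a + (- complex_of_real ((cmod b ^ 2 + cmod w ^ 2) / 2)) + b * cnj w
    = (- complex_of_real ((cmod a ^ 2 + cmod b ^ 2) / 2)) + (- complex_of_real ((cmod w)\<^sup>2) + w * cnj a + b * cnj w)"
    by (simp add: algebra_simps add_divide_distrib)
  finally show ?thesis unfolding gE_def exp_add[of "- complex_of_real ((cmod a ^ 2 + cmod b ^ 2) / 2)"] by (simp add: ac_simps)
qed

lemma kernel_moment:
  shows "integrable lborel (\<lambda>w. cnj w ^ p * (ginibre_K w a * ginibre_K b w))"
    and "(\<integral>w. cnj w ^ p * (ginibre_K w a * ginibre_K b w) \<partial>lborel) = cnj a ^ p * ginibre_K b a"
proof -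
  define c where "c = complex_of_real (1/pi) * complex_of_real (1/pi) * exp (- complex_of_real ((cmod a ^ 2 + cmod b ^ 2) / 2))"
  have eq: "(\<lambda>w. cnj w ^ p * (ginibre_K w a * ginibre_K b w)) = (\<lambda>w. c * gmono 0 p a b w)"
    by (rule ext) (simp add: KK_prod gmono_def c_def ac_simps)
  show "integrable lborel (\<lambda>w. cnj w ^ p * (ginibre_K w a * ginibre_K b w))"
    unfolding eq by (intro Bochner_Integration.integrable_mult_right integrable_gmono)
  have "(\<integral>w. cnj w ^ p * (ginibre_K w a * ginibre_K b w) \<partial>lborel) = c * (complex_of_real pi * cnj a ^ p * exp (b * cnj a))"
    unfolding eq by (simp add: integral_gmono)
  also have "\<dots> = cnj a ^ p * ginibre_K b a"
    unfolding c_def ginibre_K_def by (simp add: field_simps add.commute)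
  finally show "(\<integral>w. cnj w ^ p * (ginibre_K w a * ginibre_K b w) \<partial>lborel) = cnj a ^ p * ginibre_K b a" .
qed



theorem mainTheorem1:
  fixes k p :: nat and zs :: "nat \<Rightarrow> complex"
  assumes "k \<ge> 1"
  shows "integrable lborel
           (\<lambda>w::complex. cnj w ^ p *
              (ginibre_rho (k + 1) (zs(k := w)) - complex_of_real (1 / pi) * ginibre_rho k zs))
       \<and> (\<integral>w. cnj w ^ p *
              (ginibre_rho (k + 1) (zs(k := w)) - complex_of_real (1 / pi) * ginibre_rho k zs) \<partial>lborel)
         + (\<Sum>j<k. cnj (zs j) ^ p) * ginibre_rho k zs = 0"
proof -
  define A where "A = mat k k (\<lambda>(j,l). ginibre_K (zs j) (zs l))"
  define Mw where "Mw w = mat (k+1) (k+1) (\<lambda>(j,l). ginibre_K ((zs(k:=w)) j) ((zs(k:=w)) l))" for w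
  define cf where "cf j l = cofactor A j l" for j l
  have Mc: "Mw w \<in> carrier_mat (Suc k) (Suc k)" for w
    unfolding Mw_def by simp
  have del: "mat_delete (Mw w) k k = A" for w
    unfolding Mw_def A_def by (intro eq_matI) (auto simp: mat_delete_def)
  have Kww: "ginibre_K w w = complex_of_real (1/pi)" for w
  proof -
    have "w * cnj w = complex_of_real ((cmod w)\<^sup>2)" using complex_norm_square[of w] by simp
    then show ?thesis unfolding ginibre_K_def by (simp add: exp_minus field_simps)
  qed
  have rhok: "ginibre_rho k zs = det A"
    unfolding ginibre_rho_def A_def ..
  have rho: "ginibre_rho (k+1) (zs(k:=w)) = complex_of_real (1/pi) * ginibre_rho k zs
      - (\<Sum>l<k. \<Sum>j<k. ginibre_K w (zs l) * ginibre_K (zs j) w * cf j l)" for w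
  proof -
    have "ginibre_rho (k+1) (zs(k:=w)) = det (Mw w)"
      unfolding ginibre_rho_def Mw_def ..
    also have "\<dots> = Mw w $$ (k,k) * det (mat_delete (Mw w) k k)
     - (\<Sum>l<k. \<Sum>j<k. Mw w $$ (k,l) * Mw w $$ (j,k) * cofactor (mat_delete (Mw w) k k) j l)"
      by (rule det_block[OF Mc assms])
    also have "\<dots> = complex_of_real (1/pi) * ginibre_rho k zs
      - (\<Sum>l<k. \<Sum>j<k. ginibre_K w (zs l) * ginibre_K (zs j) w * cf j l)"
      unfolding del rhok cf_def
      by (intro arg_cong2[where f="(-)"] arg_cong2[where f="(*)"] sum.cong refl)
         (auto simp: Mw_def Kww)
    finally show ?thesis .
  qed
  have fun_eq: "(\<lambda>w. cnj w ^ p * (ginibre_rho (k + 1) (zs(k := w)) - complex_of_real (1 / pi) * ginibre_rho k zs))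
     = (\<lambda>w. - (\<Sum>l<k. \<Sum>j<k. cf j l * (cnj w ^ p * (ginibre_K w (zs l) * ginibre_K (zs j) w))))"
    by (rule ext) (unfold rho, simp add: sum_distrib_left sum_negf mult_ac)
  have int: "integrable lborel
           (\<lambda>w::complex. cnj w ^ p *
              (ginibre_rho (k + 1) (zs(k := w)) - complex_of_real (1 / pi) * ginibre_rho k zs))"
    unfolding fun_eq
    by (intro Bochner_Integration.integrable_minus Bochner_Integration.integrable_sum
        Bochner_Integration.integrable_mult_right kernel_moment(1))
  have "(\<integral>w. cnj w ^ p *
              (ginibre_rho (k + 1) (zs(k := w)) - complex_of_real (1 / pi) * ginibre_rho k zs) \<partial>lborel)
      = - (\<Sum>l<k. \<Sum>j<k. cf j l * (cnj (zs l) ^ p * ginibre_K (zs j) (zs l)))"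
    unfolding fun_eq
    by (simp add: Bochner_Integration.integral_minus Bochner_Integration.integral_sum
        Bochner_Integration.integrable_sum kernel_moment)
  also have "\<dots> = - (\<Sum>l<k. cnj (zs l) ^ p * det A)"
  proof -
    have "(\<Sum>j<k. cf j l * (cnj (zs l) ^ p * ginibre_K (zs j) (zs l))) = cnj (zs l) ^ p * det A" if l: "l < k" for l
    proof -
      have A: "A \<in> carrier_mat k k" unfolding A_def by simp
      have "det A = (\<Sum>j<k. A $$ (j,l) * cofactor A j l)"
        by (rule laplace_expansion_column[OF A l])
      also have "\<dots> = (\<Sum>j<k. ginibre_K (zs j) (zs l) * cf j l)"
        by (rule sum.cong) (auto simp: A_def cf_def l)
      finally show ?thesis by (simp add: sum_distrib_left mult_ac)
    qed
    then show ?thesis by simp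
  qed
  finally have "(\<integral>w. cnj w ^ p *
              (ginibre_rho (k + 1) (zs(k := w)) - complex_of_real (1 / pi) * ginibre_rho k zs) \<partial>lborel)
         + (\<Sum>j<k. cnj (zs j) ^ p) * ginibre_rho k zs = 0"
    by (simp add: rhok sum_distrib_right)
  with int show ?thesis by simp
qed

end
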